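(* Let $x,y>0$, let $\theta\in(0,\frac{\pi}{2})$, and let $\mathbf z=(xy\cos\theta,x^2,y^2)$. For $\theta\in(\arccos\frac{2}{\pi},\frac{\pi}{3})$ let $\beta_1\in(1,\infty)$ be the unique solution of $$\arccos\left(\frac{1}{\beta_1}\right)=\frac{(\beta_1+\cos\theta)\sqrt{\beta_1^2-1}}{\beta_1(\beta_1\cos\theta+1)}.$$ Let $\Lambda^*_-$ be as defined in the context. Then $\Lambda^*_-(\mathbf z)=\frac{x^2}{2}+\frac{y^2}{2}-1-\ln(xy)+E(\theta)$, where: - $E(\theta)=0$ if $\theta\in(0,\arccos\frac{2}{\pi}]$; - $E(\theta)=\ln\left(\frac{\pi\beta_1(\beta_1\cos\theta+1)}{2(\cos\theta+\beta_1)^2}\right)$ if $\theta\in(\arccos\frac{2}{\pi},\frac{\pi}{3})$; - $E(\theta)=\ln\left(\frac{\pi}{2(1+\cos\theta)}\right)$ if $\theta\in[\frac{\pi}{3},\frac{\pi}{2})$.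
   Context: For $\boldsymbol\lambda=(\lambda_1,\lambda_2,\lambda_3)\in\mathbb{R}^3$ let $D=\lambda_1^2-(1-2\lambda_2)(1-2\lambda_3)$, and let $$S=\{\boldsymbol\lambda:\lambda_2<\tfrac12,\ \lambda_3<\tfrac12,\ D<0\}.$$ For $\boldsymbol\lambda\in S$ put $$\Lambda(\boldsymbol\lambda)=\ln\left(\pi+2\arctan\left(\frac{\lambda_1}{\sqrt{-D}}\right)\right)-\ln\pi-\tfrac12\ln(-D).$$ This is the log moment generating function of $(\hat X\hat Y,\hat X^2,\hat Y^2)$ for independent half-normal $\hat X,\hat Y$. Define $$\Lambda^*_-(\mathbf z)=\sup_{\boldsymbol\lambda\in S,\ \lambda_1<0}\{\langle\boldsymbol\lambda,\mathbf z\rangle-\Lambda(\boldsymbol\lambda)\}.$$ *)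

theory Defs
  imports "HOL-Analysis.Analysis"
begin

definition Dd :: "real \<times> real \<times> real \<Rightarrow> real" where
  "Dd l = (case l of (l1, l2, l3) \<Rightarrow> l1^2 - (1 - 2*l2) * (1 - 2*l3))"

definition SS :: "(real \<times> real \<times> real) set" where
  "SS = {(l1, l2, l3). l2 < 1/2 \<and> l3 < 1/2 \<and> Dd (l1, l2, l3) < 0}"

definition Lam :: "real \<times> real \<times> real \<Rightarrow> real" where
  "Lam l = (case l of (l1, l2, l3) \<Rightarrow>
     ln (pi + 2 * arctan (l1 / sqrt (- Dd l))) - ln pi - (1/2) * ln (- Dd l))"

definition ip3 :: "real \<times> real \<times> real \<Rightarrow> real \<times> real \<times> real \<Rightarrow> real" where
  "ip3 l z = (case l of (l1, l2, l3) \<Rightarrow> case z of (z1, z2, z3) \<Rightarrow> l1*z1 + l2*z2 + l3*z3)"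

text \<open>Lambda^*_-, as an extended real supremum (so it is always defined).\<close>
definition LamStarMinus :: "real \<times> real \<times> real \<Rightarrow> ereal" where
  "LamStarMinus z = (SUP l \<in> {l \<in> SS. fst l < 0}. ereal (ip3 l z - Lam l))"

definition beta1 :: "real \<Rightarrow> real" where
  "beta1 \<theta> = (THE b. 1 < b \<and>
      arccos (1 / b) = (b + cos \<theta>) * sqrt (b^2 - 1) / (b * (b * cos \<theta> + 1)))"

end

theory Submission
  imports Defs
begin

definition Gf :: "real \<Rightarrow> real \<Rightarrow> real" where
  "Gf c u = ln pi + ln (sin u) - ln 2 - ln u - ln (1 + c * cos u)"
definition Kf :: "real \<Rightarrow> real \<Rightarrow> real" where
  "Kf c u = u * (cos u + c) - sin u * (1 + c * cos u)"
definition qf :: "real \<Rightarrow> real \<Rightarrow> real" where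
  "qf c u = 2 * c * sin u - u"

lemma sc_id: "(c::real) * (cos (u::real) * cos u) + c * (sin u * sin u) = c"
proof -
  have "c * (cos u * cos u + sin u * sin u) = c" by simp
  thus ?thesis by (simp only: distrib_left)
qed

lemma Gf_deriv:
  assumes "0 < u" "u \<le> pi/2" "0 \<le> c"
  shows "(Gf c has_real_derivative (Kf c u / (u * sin u * (1 + c*cos u)))) (at u)"
proof -
  have s: "sin u > 0" using assms by (intro sin_gt_zero) auto
  have co: "cos u \<ge> 0" using assms by (intro cos_ge_zero) auto
  have p: "1 + c * cos u > 0" using co assms by (simp add: add_pos_nonneg)
  have d1: "(Gf c has_real_derivative (cos u / sin u - 1/u - (c * - sin u)/(1+c*cos u))) (at u)"
    unfolding Gf_def [abs_def]
    using s p assms by (auto intro!: derivative_eq_intros)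
  have eq: "cos u / sin u - 1/u - (c * - sin u)/(1+c*cos u) = Kf c u / (u * sin u * (1 + c*cos u))"
  proof -
    have e1: "cos u / sin u - (c * - sin u)/(1+c*cos u) = (cos u + c) / (sin u * (1 + c*cos u))"
      using s p sc_id[of c u] by (simp add: field_simps)
    have "cos u / sin u - 1/u - (c * - sin u)/(1+c*cos u) = (cos u + c) / (sin u * (1 + c*cos u)) - 1/u"
      using e1 by simp
    also have "\<dots> = Kf c u / (u * sin u * (1 + c*cos u))"
    proof -
      define d where "d = 1 + c*cos u"
      have "d > 0" using p d_def by simp
      then show ?thesis using s assms unfolding Kf_def d_def[symmetric] by (simp add: field_simps)
    qed
    finally show ?thesis .
  qed
  show ?thesis using d1 eq by simp
qed

lemma Kf_deriv: "(Kf c has_real_derivative (sin u * qf c u)) (at u)"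
proof -
  have d1: "(Kf c has_real_derivative ((cos u + c) + u * (- sin u) - (cos u * (1 + c*cos u) + sin u * (c * - sin u)))) (at u)"
    unfolding Kf_def [abs_def] by (auto intro!: derivative_eq_intros)
  have eq: "(cos u + c) + u * (- sin u) - (cos u * (1 + c*cos u) + sin u * (c * - sin u)) = sin u * qf c u"
    using sc_id[of c u] unfolding qf_def by (simp add: algebra_simps power2_eq_square)
  show ?thesis using d1 eq by simp
qed

lemma M_pos:
  assumes "0 < v" "v \<le> pi/2"
  shows "sin v - v * cos v > 0"
proof -
  have "(\<lambda>v. sin v - v * cos v) 0 < (\<lambda>v. sin v - v * cos v) v"
  proof (rule DERIV_pos_imp_increasing_open[OF assms(1)])
    fix x assume x: "0 < x" "x < v"
    have "((\<lambda>v. sin v - v * cos v) has_real_derivative (cos x - (1 * cos x + x * - sin x))) (at x)"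
      by (auto intro!: derivative_eq_intros)
    moreover have "sin x > 0" using x assms by (intro sin_gt_zero) auto
    ultimately show "\<exists>y. ((\<lambda>v. sin v - v * cos v) has_real_derivative y) (at x) \<and> y > 0"
      using x by (intro exI[of _ "cos x - (1 * cos x + x * - sin x)"]) auto
  next
    show "continuous_on {0..v} (\<lambda>v. sin v - v * cos v)"
      by (intro continuous_intros)
  qed
  then show ?thesis by simp
qed

lemma sinc_decr:
  assumes "0 < t" "t < t'" "t' \<le> pi/2"
  shows "sin t' / t' < sin t / t"
proof -
  have "(\<lambda>v. sin v / v) t > (\<lambda>v. sin v / v) t'"
  proof (rule DERIV_neg_imp_decreasing_open[OF assms(2)])
    fix x assume x: "t < x" "x < t'"
    have x0: "x > 0" using x assms by simp
    have "((\<lambda>v. sin v / v) has_real_derivative ((cos x * x - sin x * 1) / (x * x))) (at x)"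
      using x0 by (auto intro!: derivative_eq_intros)
    moreover have "(cos x * x - sin x * 1) / (x * x) < 0"
      using M_pos[of x] x0 x assms by (intro divide_neg_pos) (auto simp: algebra_simps)
    ultimately show "\<exists>y. ((\<lambda>v. sin v / v) has_real_derivative y) (at x) \<and> y < 0" by blast
  next
    show "continuous_on {t..t'} (\<lambda>v. sin v / v)"
      using assms by (intro continuous_intros) auto
  qed
  then show ?thesis by simp
qed

lemma q_after:
  assumes "c > 0" "0 < t" "t < t'" "t' \<le> pi/2" "qf c t \<le> 0"
  shows "qf c t' < 0"
proof -
  have "2 * c * sin t \<le> t" using assms(5) unfolding qf_def by simp
  hence a: "2 * c * (sin t / t) \<le> 1" using assms(2) by (simp add: field_simps)
  have "2 * c * (sin t' / t') < 2 * c * (sin t / t)"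
    using mult_strict_left_mono[OF sinc_decr[OF assms(2-4)], of "2*c"] assms(1) by simp
  hence "2 * c * (sin t' / t') < 1" using a by linarith
  hence "2 * c * sin t' < t'" using assms by (simp add: field_simps)
  then show ?thesis unfolding qf_def by simp
qed

lemma qf_deriv: "(qf c has_real_derivative (2 * c * cos u - 1)) (at u)"
  unfolding qf_def [abs_def] by (auto intro!: derivative_eq_intros)

lemma q_init:
  assumes "c > 1/2"
  shows "\<exists>d>0. d \<le> pi/2 \<and> qf c d > 0"
proof -
  have "(qf c has_real_derivative (2 * c * cos 0 - 1)) (at 0)" by (rule qf_deriv)
  moreover have "2 * c * cos 0 - 1 > (0::real)" using assms by simp
  ultimately obtain d where d: "d > 0" "\<forall>h>0. h < d \<longrightarrow> qf c 0 < qf c (0 + h)"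
    using DERIV_pos_inc_right by blast
  define h where "h = min (d/2) (pi/2)"
  have "h > 0" "h < d" "h \<le> pi/2" using d pi_gt_zero unfolding h_def by auto
  moreover have "qf c 0 = 0" unfolding qf_def by simp
  ultimately show ?thesis using d by (intro exI[of _ h]) auto
qed

lemma qf_cont: "continuous_on A (qf c)"
  unfolding qf_def [abs_def] by (intro continuous_intros)

lemma Kf_cont: "continuous_on A (Kf c)"
  unfolding Kf_def [abs_def] by (intro continuous_intros)

lemma u0_exists:
  assumes "c > 1/2"
  shows "\<exists>u0. 0 < u0 \<and> u0 \<le> pi/2 \<and> (\<forall>t. 0 < t \<and> t < u0 \<longrightarrow> qf c t > 0)
      \<and> (\<forall>t. u0 < t \<and> t \<le> pi/2 \<longrightarrow> qf c t < 0)"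
proof (cases "qf c (pi/2) \<ge> 0")
  case True
  have "\<forall>t. 0 < t \<and> t < pi/2 \<longrightarrow> qf c t > 0"
  proof (intro allI impI)
    fix t assume t: "0 < t \<and> t < pi/2"
    show "qf c t > 0"
    proof (rule ccontr)
      assume "\<not> qf c t > 0"
      hence "qf c (pi/2) < 0" using q_after[of c t "pi/2"] assms t by auto
      thus False using True by simp
    qed
  qed
  then show ?thesis by (intro exI[of _ "pi/2"]) auto
next
  case False
  obtain d where d: "d > 0" "d \<le> pi/2" "qf c d > 0" using q_init[OF assms] by blast
  obtain u0 where u0: "d \<le> u0" "u0 \<le> pi/2" "qf c u0 = 0"
    using IVT2'[of "qf c" "pi/2" 0 d] False d qf_cont by auto
  have "u0 \<noteq> d" using u0 d by auto
  hence u0d: "u0 > d" using u0 by simp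
  have A: "\<forall>t. 0 < t \<and> t < u0 \<longrightarrow> qf c t > 0"
  proof (intro allI impI)
    fix t assume t: "0 < t \<and> t < u0"
    show "qf c t > 0"
    proof (rule ccontr)
      assume "\<not> qf c t > 0"
      hence "qf c u0 < 0" using q_after[of c t u0] assms t u0 by auto
      thus False using u0 by simp
    qed
  qed
  have B: "\<forall>t. u0 < t \<and> t \<le> pi/2 \<longrightarrow> qf c t < 0"
    using q_after[of c u0] assms u0 u0d d by auto
  show ?thesis using A B u0 u0d d by (intro exI[of _ u0]) auto
qed

lemma K_incr:
  assumes "0 \<le> a" "a < b" "\<And>x. a < x \<Longrightarrow> x < b \<Longrightarrow> qf c x > 0" "b \<le> pi"
  shows "Kf c a < Kf c b"
proof (rule DERIV_pos_imp_increasing_open[OF assms(2)])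
  fix x assume x: "a < x" "x < b"
  have "sin x > 0" using x assms by (intro sin_gt_zero) auto
  then show "\<exists>y. (Kf c has_real_derivative y) (at x) \<and> y > 0"
    using Kf_deriv[of c x] assms(3)[OF x] by (intro exI[of _ "sin x * qf c x"]) auto
qed (rule Kf_cont)

lemma K_decr:
  assumes "0 \<le> a" "a < b" "\<And>x. a < x \<Longrightarrow> x < b \<Longrightarrow> qf c x < 0" "b \<le> pi"
  shows "Kf c a > Kf c b"
proof (rule DERIV_neg_imp_decreasing_open[OF assms(2)])
  fix x assume x: "a < x" "x < b"
  have "sin x > 0" using x assms by (intro sin_gt_zero) auto
  then show "\<exists>y. (Kf c has_real_derivative y) (at x) \<and> y < 0"
    using Kf_deriv[of c x] assms(3)[OF x] by (intro exI[of _ "sin x * qf c x"]) (auto simp: mult_pos_neg)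
qed (rule Kf_cont)

lemma K_nonincr:
  assumes "0 \<le> a" "a \<le> b" "\<And>x. a < x \<Longrightarrow> x < b \<Longrightarrow> qf c x \<le> 0" "b \<le> pi"
  shows "Kf c a \<ge> Kf c b"
proof (rule DERIV_nonpos_imp_decreasing_open[OF assms(2)])
  fix x assume x: "a < x" "x < b"
  have "sin x > 0" using x assms by (intro sin_gt_zero) auto
  then show "\<exists>y. (Kf c has_real_derivative y) (at x) \<and> y \<le> 0"
    using Kf_deriv[of c x] assms(3)[OF x] by (intro exI[of _ "sin x * qf c x"]) (auto simp: mult_nonneg_nonpos)
qed (rule Kf_cont)

lemma Gf_cont:
  assumes "0 < a" "b \<le> pi/2" "0 \<le> c"
  shows "continuous_on {a..b} (Gf c)"
proof -
  have "\<forall>x\<in>{a..b}. isCont (Gf c) x"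
    using assms by (auto intro!: DERIV_isCont[OF Gf_deriv])
  then show ?thesis by (rule continuous_at_imp_continuous_on)
qed

lemma G_incr:
  assumes "0 < a" "a \<le> b" "b \<le> pi/2" "0 \<le> c" "\<And>x. a < x \<Longrightarrow> x < b \<Longrightarrow> Kf c x \<ge> 0"
  shows "Gf c a \<le> Gf c b"
proof (rule DERIV_nonneg_imp_increasing_open[OF assms(2)])
  fix x assume x: "a < x" "x < b"
  have s: "sin x > 0" using x assms by (intro sin_gt_zero) auto
  have co: "cos x \<ge> 0" using x assms by (intro cos_ge_zero) auto
  have p: "1 + c * cos x > 0" using co assms by (simp add: add_pos_nonneg)
  have "Kf c x / (x * sin x * (1 + c*cos x)) \<ge> 0"
    using s p x assms(1) assms(5)[OF x] by (intro divide_nonneg_pos) auto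
  then show "\<exists>y. (Gf c has_real_derivative y) (at x) \<and> y \<ge> 0"
    using Gf_deriv[of x c] x assms by (intro exI[of _ "Kf c x / (x * sin x * (1 + c*cos x))"]) auto
qed (rule Gf_cont[OF assms(1,3,4)])

lemma G_decr:
  assumes "0 < a" "a \<le> b" "b \<le> pi/2" "0 \<le> c" "\<And>x. a < x \<Longrightarrow> x < b \<Longrightarrow> Kf c x \<le> 0"
  shows "Gf c a \<ge> Gf c b"
proof (rule DERIV_nonpos_imp_decreasing_open[OF assms(2)])
  fix x assume x: "a < x" "x < b"
  have s: "sin x > 0" using x assms by (intro sin_gt_zero) auto
  have co: "cos x \<ge> 0" using x assms by (intro cos_ge_zero) auto
  have p: "1 + c * cos x > 0" using co assms by (simp add: add_pos_nonneg)
  have "Kf c x / (x * sin x * (1 + c*cos x)) \<le> 0"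
    using s p x assms(1) assms(5)[OF x] by (intro divide_nonpos_pos) auto
  then show "\<exists>y. (Gf c has_real_derivative y) (at x) \<and> y \<le> 0"
    using Gf_deriv[of x c] x assms by (intro exI[of _ "Kf c x / (x * sin x * (1 + c*cos x))"]) auto
qed (rule Gf_cont[OF assms(1,3,4)])

lemma Kf0: "Kf c 0 = 0" unfolding Kf_def by simp
lemma Kfpi2: "Kf c (pi/2) = pi/2 * c - 1" unfolding Kf_def by simp
lemma Gfpi2: "Gf c (pi/2) = 0" unfolding Gf_def by (simp add: ln_div)

lemma pi_gt_2: "2/pi > (1/2::real)"
  using pi_less_4 pi_gt_zero by (simp add: field_simps)

lemma K_pos_upto:
  assumes "0 < x" "x \<le> u0" "u0 \<le> pi/2" "\<forall>t. 0 < t \<and> t < u0 \<longrightarrow> qf c t > 0"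
  shows "Kf c x > 0"
  using K_incr[of 0 x c] assms Kf0[of c] by auto

lemma K_nonneg_R1:
  assumes "2/pi \<le> c" "0 < x" "x < pi/2"
  shows "Kf c x \<ge> 0"
proof -
  have c: "c > 1/2" using assms pi_gt_2 by linarith
  obtain u0 where u0: "0 < u0" "u0 \<le> pi/2" "\<forall>t. 0 < t \<and> t < u0 \<longrightarrow> qf c t > 0"
      "\<forall>t. u0 < t \<and> t \<le> pi/2 \<longrightarrow> qf c t < 0"
    using u0_exists[OF c] by blast
  show ?thesis
  proof (cases "x \<le> u0")
    case True then show ?thesis using K_pos_upto[of x u0 c] u0 assms by auto
  next
    case False
    have "Kf c x > Kf c (pi/2)"
      using K_decr[of x "pi/2" c] u0 assms False by auto
    moreover have "Kf c (pi/2) \<ge> 0" unfolding Kfpi2 using assms(1) pi_gt_zero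
      by (simp add: field_simps)
    ultimately show ?thesis by linarith
  qed
qed

lemma G_le_R1:
  assumes "2/pi \<le> c" "0 < u" "u < pi/2"
  shows "Gf c u \<le> 0"
proof -
  have p0: "0 < 2/pi" by simp
  have "c \<ge> 0" using assms(1) p0 by linarith
  then have "Gf c u \<le> Gf c (pi/2)"
    using G_incr[of u "pi/2" c] K_nonneg_R1[OF assms(1)] assms by auto
  then show ?thesis by (simp add: Gfpi2)
qed

lemma R2_root:
  assumes "1/2 < c" "c < 2/pi"
  shows "\<exists>u1. 0 < u1 \<and> u1 < pi/2 \<and> Kf c u1 = 0 \<and> (\<forall>x. 0 < x \<and> x < u1 \<longrightarrow> Kf c x > 0)
     \<and> (\<forall>x. u1 < x \<and> x \<le> pi/2 \<longrightarrow> Kf c x < 0)"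
proof -
  obtain u0 where u0: "0 < u0" "u0 \<le> pi/2" "\<forall>t. 0 < t \<and> t < u0 \<longrightarrow> qf c t > 0"
      "\<forall>t. u0 < t \<and> t \<le> pi/2 \<longrightarrow> qf c t < 0"
    using u0_exists[OF assms(1)] by blast
  have Ku0: "Kf c u0 > 0" using K_pos_upto[of u0 u0 c] u0 by auto
  have Kend: "Kf c (pi/2) < 0" unfolding Kfpi2 using assms(2) pi_gt_zero
    by (simp add: field_simps)
  have "u0 \<noteq> pi/2"
  proof
    assume h: "u0 = pi/2"
    have "Kf c (pi/2) > 0" using Ku0 unfolding h .
    thus False using Kend by simp
  qed
  hence u0l: "u0 < pi/2" using u0 by simp
  obtain u1 where u1: "u0 \<le> u1" "u1 \<le> pi/2" "Kf c u1 = 0"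
    using IVT2'[of "Kf c" "pi/2" 0 u0] Ku0 Kend u0l Kf_cont by fastforce
  have u1a: "u0 < u1" using u1 Ku0 by (cases "u1 = u0") auto
  have u1b: "u1 < pi/2" using u1 Kend by (cases "u1 = pi/2") auto
  have A: "\<forall>x. 0 < x \<and> x < u1 \<longrightarrow> Kf c x > 0"
  proof (intro allI impI)
    fix x assume x: "0 < x \<and> x < u1"
    show "Kf c x > 0"
    proof (cases "x \<le> u0")
      case True then show ?thesis using K_pos_upto[of x u0 c] u0 x by auto
    next
      case False
      then show ?thesis using K_decr[of x u1 c] u0 x u1 u1b by auto
    qed
  qed
  have B: "\<forall>x. u1 < x \<and> x \<le> pi/2 \<longrightarrow> Kf c x < 0"
    using K_decr[of u1 _ c] u0 u1 u1a by auto
  show ?thesis using A B u1 u1a u1b u0 by (intro exI[of _ u1]) auto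
qed

lemma G_le_R2:
  assumes "0 \<le> c" "0 < u1" "u1 < pi/2" "\<forall>x. 0 < x \<and> x < u1 \<longrightarrow> Kf c x > 0"
     "\<forall>x. u1 < x \<and> x \<le> pi/2 \<longrightarrow> Kf c x < 0" "0 < u" "u < pi/2"
  shows "Gf c u \<le> Gf c u1"
proof (cases "u \<le> u1")
  case True
  have "\<And>x. u < x \<Longrightarrow> x < u1 \<Longrightarrow> 0 \<le> Kf c x"
  proof -
    fix x assume "u < x" "x < u1"
    then have "0 < x \<and> x < u1" using assms(6) by linarith
    then show "0 \<le> Kf c x" using assms(4) by (simp add: less_imp_le)
  qed
  then show ?thesis using G_incr[of u u1 c] assms True by auto
next
  case False
  have "\<And>x. u1 < x \<Longrightarrow> x < u \<Longrightarrow> Kf c x \<le> 0"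
  proof -
    fix x assume "u1 < x" "x < u"
    then have "u1 < x \<and> x \<le> pi/2" using assms(7) by linarith
    then show "Kf c x \<le> 0" using assms(5) by (simp add: less_imp_le)
  qed
  then show ?thesis using G_decr[of u1 u c] assms False by auto
qed

lemma K_nonpos_R3:
  assumes "0 \<le> c" "c \<le> 1/2" "0 < x" "x \<le> pi/2"
  shows "Kf c x \<le> 0"
proof -
  have "\<And>t. 0 < t \<Longrightarrow> t < x \<Longrightarrow> qf c t \<le> 0"
  proof -
    fix t :: real assume t: "0 < t" "t < x"
    have "sin t \<ge> 0" using t assms by (intro sin_ge_zero) auto
    hence "2 * c * sin t \<le> sin t" using assms by (simp add: mult_left_le_one_le)
    also have "\<dots> \<le> t" using t by (intro sin_x_le_x) auto
    finally show "qf c t \<le> 0" unfolding qf_def by simp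
  qed
  then have "Kf c 0 \<ge> Kf c x" using K_nonincr[of 0 x c] assms by auto
  then show ?thesis by (simp add: Kf0)
qed

lemma sinc_lim: "((\<lambda>v::real. sin v / v) \<longlongrightarrow> 1) (at_right 0)"
proof -
  have "((\<lambda>y::real. sin y / y) \<longlongrightarrow> 1) (at 0)"
    using DERIV_sin[of 0] unfolding DERIV_def by simp
  then show ?thesis by (rule filterlim_at_split[THEN iffD1, THEN conjunct2])
qed

lemma Gf_lim0:
  assumes "0 \<le> c"
  shows "(Gf c \<longlongrightarrow> ln (pi / (2 * (1 + c)))) (at_right 0)"
proof -
  have ev: "eventually (\<lambda>v. ln pi - ln 2 + ln (sin v / v) - ln (1 + c * cos v) = Gf c v) (at_right 0)"
  proof -
    have "eventually (\<lambda>v. v \<in> {0<..<pi}) (at_right (0::real))"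
      by (rule eventually_at_right_real) simp
    then show ?thesis
    proof (rule eventually_mono)
      fix v assume v: "v \<in> {0<..<pi}"
      have "sin v > 0" using v by (intro sin_gt_zero) auto
      then show "ln pi - ln 2 + ln (sin v / v) - ln (1 + c * cos v) = Gf c v"
        using v unfolding Gf_def by (simp add: ln_div)
    qed
  qed
  have "((\<lambda>v. ln pi - ln 2 + ln (sin v / v) - ln (1 + c * cos v)) \<longlongrightarrow>
      ln pi - ln 2 + ln 1 - ln (1 + c * cos 0)) (at_right 0)"
    using assms by (intro tendsto_intros sinc_lim) auto
  hence "(Gf c \<longlongrightarrow> ln pi - ln 2 + ln 1 - ln (1 + c * cos 0)) (at_right 0)"
    using ev by (rule Lim_transform_eventually)
  moreover have "ln pi - ln 2 + ln 1 - ln (1 + c * cos 0) = ln (pi / (2 * (1 + c)))"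
  proof -
    have "ln (2*(1+c)) = ln 2 + ln (1+c)" using assms by (intro ln_mult_pos) auto
    moreover have "ln (pi / (2 * (1 + c))) = ln pi - ln (2*(1+c))"
      using assms pi_gt_zero by (intro ln_divide_pos) auto
    ultimately show ?thesis by simp
  qed
  ultimately show ?thesis by simp
qed

lemma G_le_R3:
  assumes "0 \<le> c" "c \<le> 1/2" "0 < u" "u < pi/2"
  shows "Gf c u \<le> ln (pi / (2 * (1 + c)))"
proof -
  have ev: "eventually (\<lambda>v. Gf c u \<le> Gf c v) (at_right 0)"
  proof -
    have "eventually (\<lambda>v. v \<in> {0<..<u}) (at_right (0::real))"
      by (rule eventually_at_right_real) (use assms in simp)
    then show ?thesis
    proof (rule eventually_mono)
      fix v assume v: "v \<in> {0<..<u}"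
      show "Gf c u \<le> Gf c v"
        using G_decr[of v u c] K_nonpos_R3[OF assms(1,2)] v assms by auto
    qed
  qed
  show ?thesis
    by (rule tendsto_le[OF trivial_limit_at_right_real Gf_lim0[OF assms(1)] tendsto_const ev])
qed

lemma approx_right:
  fixes f :: "real \<Rightarrow> real"
  assumes "(f \<longlongrightarrow> L) (at_right a)" "a < b" "e > 0"
  shows "\<exists>v. a < v \<and> v < b \<and> f v > L - e"
proof -
  have "eventually (\<lambda>v. f v > L - e) (at_right a)"
    using assms by (intro order_tendstoD(1)) auto
  moreover have "eventually (\<lambda>v. v \<in> {a<..<b}) (at_right a)"
    using assms by (intro eventually_at_right_real)
  ultimately have "eventually (\<lambda>v. f v > L - e \<and> v \<in> {a<..<b}) (at_right a)"
    by (rule eventually_conj)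
  then obtain v where "f v > L - e \<and> v \<in> {a<..<b}"
    using eventually_happens[of _ "at_right a"] trivial_limit_at_right_real by blast
  then show ?thesis by auto
qed

lemma approx_left:
  fixes f :: "real \<Rightarrow> real"
  assumes "(f \<longlongrightarrow> L) (at_left b)" "a < b" "e > 0"
  shows "\<exists>v. a < v \<and> v < b \<and> f v > L - e"
proof -
  have "eventually (\<lambda>v. f v > L - e) (at_left b)"
    using assms by (intro order_tendstoD(1)) auto
  moreover have "eventually (\<lambda>v. v \<in> {a<..<b}) (at_left b)"
    using assms by (intro eventually_at_left_real)
  ultimately have "eventually (\<lambda>v. f v > L - e \<and> v \<in> {a<..<b}) (at_left b)"
    by (rule eventually_conj)
  then obtain v where "f v > L - e \<and> v \<in> {a<..<b}"
    using eventually_happens[of _ "at_left b"] trivial_limit_at_left_real by blast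
  then show ?thesis by auto
qed

lemma Gf_limpi2:
  assumes "0 \<le> c"
  shows "(Gf c \<longlongrightarrow> 0) (at_left (pi/2))"
proof -
  have "isCont (Gf c) (pi/2)"
    using assms by (intro DERIV_isCont[OF Gf_deriv]) auto
  hence "(Gf c \<longlongrightarrow> Gf c (pi/2)) (at (pi/2))" by (rule isContD)
  hence "(Gf c \<longlongrightarrow> Gf c (pi/2)) (at_left (pi/2))" by (rule filterlim_at_split[THEN iffD1, THEN conjunct1])
  then show ?thesis by (simp add: Gfpi2)
qed

lemma val_expr:
  fixes l1 l2 l3 z1 z2 z3 :: real
  assumes "(1 - 2*l2) * (1 - 2*l3) - l1^2 > 0"
  shows "ip3 (l1,l2,l3) (z1,z2,z3) - Lam (l1,l2,l3) =
    l1*z1 + l2*z2 + l3*z3 - ln (pi + 2 * arctan (l1 / sqrt ((1 - 2*l2) * (1 - 2*l3) - l1^2)))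
      + ln pi + ln (sqrt ((1 - 2*l2) * (1 - 2*l3) - l1^2))"
proof -
  have "- Dd (l1,l2,l3) = (1 - 2*l2) * (1 - 2*l3) - l1^2" unfolding Dd_def by simp
  moreover have "ln (sqrt ((1 - 2*l2) * (1 - 2*l3) - l1^2)) = (1/2) * ln ((1 - 2*l2) * (1 - 2*l3) - l1^2)"
    using assms by (simp add: ln_sqrt)
  ultimately show ?thesis unfolding ip3_def Lam_def by simp
qed

lemma sqrt_sq_eq: "0 \<le> y \<Longrightarrow> x = y^2 \<Longrightarrow> sqrt x = y"
  by (simp add: real_sqrt_unique)

lemma val_bound:
  fixes x y c l1 l2 l3 :: real
  assumes xy: "x > 0" "y > 0" and c: "0 \<le> c"
    and l: "l2 < 1/2" "l3 < 1/2" "l1 < 0" "(1 - 2*l2) * (1 - 2*l3) - l1^2 > 0"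
  shows "\<exists>u. 0 < u \<and> u < pi/2 \<and> ip3 (l1,l2,l3) (x*y*c, x^2, y^2) - Lam (l1,l2,l3)
     \<le> x^2/2 + y^2/2 - 1 - ln (x*y) + Gf c u"
proof -
  define a where "a = 1 - 2*l2"
  define b where "b = 1 - 2*l3"
  define nd where "nd = a*b - l1^2"
  have a: "a > 0" and b: "b > 0" and nd: "nd > 0" using l unfolding a_def b_def nd_def by auto
  define A where "A = sqrt a"
  define B where "B = sqrt b"
  define m where "m = A * B"
  have A: "A > 0" "A^2 = a" using a unfolding A_def by auto
  have B: "B > 0" "B^2 = b" using b unfolding B_def by auto
  have m: "m > 0" "m^2 = a*b" using A B unfolding m_def by (auto simp: power_mult_distrib)
  define w where "w = l1 / sqrt nd"
  have w: "w < 0" using l nd unfolding w_def by (simp add: divide_neg_pos)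
  define u where "u = pi/2 + arctan w"
  have u: "0 < u" "u < pi/2" using w arctan_lbound[of w] unfolding u_def by auto
  have snd: "sqrt nd > 0" using nd by simp
  have ww: "1 + w^2 = m^2 / nd"
    using nd snd unfolding w_def m(2) nd_def by (simp add: field_simps power_divide)
  have sm: "sqrt (m^2) = m" using m(1) by simp
  have sw: "sqrt (1 + w^2) = m / sqrt nd"
    unfolding ww real_sqrt_divide sm ..
  have cu: "cos u = - l1 / m"
  proof -
    have "cos u = - sin (arctan w)" unfolding u_def by (simp add: cos_add)
    also have "\<dots> = - (w / (m / sqrt nd))" by (simp add: sin_arctan sw)
    also have "\<dots> = - l1 / m" using snd m unfolding w_def by (simp add: field_simps)
    finally show ?thesis .
  qed
  have su: "sin u = sqrt nd / m"
  proof -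
    have "sin u = cos (arctan w)" unfolding u_def by (simp add: sin_add)
    also have "\<dots> = 1 / (m / sqrt nd)" by (simp add: cos_arctan sw)
    also have "\<dots> = sqrt nd / m" using snd m by (simp add: field_simps)
    finally show ?thesis .
  qed
  have sinpos: "sin u > 0" using su snd m by simp
  have l1e: "l1 = - m * cos u" using cu m by (simp add: field_simps)
  have nde: "sqrt nd = m * sin u" using su m by (simp add: field_simps)
  have arg: "pi + 2 * arctan w = 2 * u" unfolding u_def by simp
  have V0: "ip3 (l1,l2,l3) (x*y*c, x^2, y^2) - Lam (l1,l2,l3) =
     l1*(x*y*c) + l2*x^2 + l3*y^2 - ln (pi + 2 * arctan (l1 / sqrt nd)) + ln pi + ln (sqrt nd)"
    using val_expr[of l2 l3 l1 "x*y*c" "x^2" "y^2"] l unfolding nd_def a_def b_def by simp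
  have V: "ip3 (l1,l2,l3) (x*y*c, x^2, y^2) - Lam (l1,l2,l3) =
     l1*(x*y*c) + l2*x^2 + l3*y^2 - ln (2*u) + ln pi + ln (m * sin u)"
    using V0 unfolding w_def[symmetric] unfolding arg nde .
  define P where "P = m * x * y"
  have P: "P > 0" using m xy unfolding P_def by simp
  have co: "cos u \<ge> 0" using u by (intro cos_ge_zero) auto
  define d where "d = 1 + c * cos u"
  have d: "d > 0" using co c unfolding d_def by (simp add: add_pos_nonneg)
  have lnP: "ln (P * d) \<le> P * d - 1" using P d by (intro ln_le_minus_one) simp
  have lnPd: "ln (P * d) = ln m + ln x + ln y + ln d"
    using P d m xy unfolding P_def by (simp add: ln_mult_pos)
  have lnxy: "ln (x*y) = ln x + ln y" using xy by (simp add: ln_mult_pos)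
  have lnms: "ln (m * sin u) = ln m + ln (sin u)" using m sinpos by (simp add: ln_mult_pos)
  have ln2u: "ln (2*u) = ln 2 + ln u" using u by (simp add: ln_mult_pos)
  have sq: "a * x^2 + b * y^2 \<ge> 2 * P"
  proof -
    have "0 \<le> (A*x - B*y)^2" by simp
    also have "\<dots> = a * x^2 + b * y^2 - 2 * P"
      unfolding P_def m_def using A B by (simp add: power2_diff power_mult_distrib algebra_simps)
    finally show ?thesis by simp
  qed
  have l2e: "l2 = (1 - a)/2" and l3e: "l3 = (1 - b)/2" unfolding a_def b_def by simp_all
  have "ip3 (l1,l2,l3) (x*y*c, x^2, y^2) - Lam (l1,l2,l3) - (x^2/2 + y^2/2 - 1 - ln (x*y) + Gf c u)
      = l1*(x*y*c) + l2*x^2 + l3*y^2 - ln (2*u) + ln pi + ln (m * sin u) - (x^2/2 + y^2/2 - 1 - ln (x*y) + Gf c u)"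
    unfolding V ..
  also have "\<dots> = - P * c * cos u - (a * x^2 + b * y^2)/2 + 1 + ln (P * d)"
    by (simp only: lnPd ln2u lnms lnxy) (simp add: Gf_def l1e l2e l3e d_def P_def algebra_simps add_divide_distrib diff_divide_distrib)
  also have "\<dots> \<le> - P * c * cos u - (a * x^2 + b * y^2)/2 + P * d"
    using lnP by simp
  also have "\<dots> = P - (a * x^2 + b * y^2)/2" unfolding d_def by (simp add: algebra_simps)
  also have "\<dots> \<le> 0" using sq by simp
  finally show ?thesis using u by (intro exI[of _ u]) auto
qed

lemma val_attain:
  fixes x y c u :: real
  assumes xy: "x > 0" "y > 0" and c: "0 \<le> c" and u: "0 < u" "u < pi/2"
  shows "\<exists>l1 l2 l3. l2 < 1/2 \<and> l3 < 1/2 \<and> l1 < 0 \<and> (1 - 2*l2) * (1 - 2*l3) - l1^2 > 0 \<and>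
     ip3 (l1,l2,l3) (x*y*c, x^2, y^2) - Lam (l1,l2,l3) = x^2/2 + y^2/2 - 1 - ln (x*y) + Gf c u"
proof -
  have co: "cos u > 0" using u by (intro cos_gt_zero) auto
  have si: "sin u > 0" using u by (intro sin_gt_zero) auto
  define d where "d = 1 + c * cos u"
  have d: "d > 0" using co c unfolding d_def by (simp add: add_pos_nonneg)
  define m where "m = 1 / (x*y*d)"
  define a where "a = 1 / (x^2*d)"
  define b where "b = 1 / (y^2*d)"
  have m: "m > 0" using xy d unfolding m_def by simp
  have a: "a > 0" using xy d unfolding a_def by simp
  have b: "b > 0" using xy d unfolding b_def by simp
  define l1 where "l1 = - m * cos u"
  define l2 where "l2 = (1 - a)/2"
  define l3 where "l3 = (1 - b)/2"
  have e2: "1 - 2*l2 = a" and e3: "1 - 2*l3 = b" unfolding l2_def l3_def by (simp_all add: field_simps)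
  have ab: "a * b = m^2" unfolding a_def b_def m_def using xy d by (simp add: field_simps power2_eq_square)
  have nd: "(1 - 2*l2) * (1 - 2*l3) - l1^2 = (m * sin u)^2"
  proof -
    have "(1 - 2*l2) * (1 - 2*l3) - l1^2 = m^2 * (1 - (cos u)^2)"
      unfolding e2 e3 ab l1_def by (simp add: algebra_simps power_mult_distrib)
    also have "\<dots> = (m * sin u)^2" by (simp add: sin_squared_eq power_mult_distrib)
    finally show ?thesis .
  qed
  have ndpos: "(1 - 2*l2) * (1 - 2*l3) - l1^2 > 0" unfolding nd using m si by simp
  have snd: "sqrt ((1 - 2*l2) * (1 - 2*l3) - l1^2) = m * sin u"
    unfolding nd using m si by simp
  have tn: "tan (u - pi/2) = - cos u / sin u"
    unfolding tan_def by (simp add: sin_diff cos_diff)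
  have at: "arctan (l1 / (m * sin u)) = u - pi/2"
  proof -
    have "l1 / (m * sin u) = - cos u / sin u" unfolding l1_def using m by simp
    then show ?thesis unfolding tn[symmetric] using u by (simp add: arctan_tan)
  qed
  have arg: "pi + 2 * arctan (l1 / (m * sin u)) = 2 * u" unfolding at by simp
  have V: "ip3 (l1,l2,l3) (x*y*c, x^2, y^2) - Lam (l1,l2,l3) =
     l1*(x*y*c) + l2*x^2 + l3*y^2 - ln (2*u) + ln pi + ln (m * sin u)"
    using val_expr[OF ndpos, of "x*y*c" "x^2" "y^2"] unfolding snd arg .
  have t1: "l1*(x*y*c) = - (c * cos u) / d" unfolding l1_def m_def using xy d by (simp add: field_simps)
  have t2: "l2*x^2 = x^2/2 - 1/(2*d)" unfolding l2_def a_def using xy d by (simp add: field_simps)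
  have t3: "l3*y^2 = y^2/2 - 1/(2*d)" unfolding l3_def b_def using xy d by (simp add: field_simps)
  have t4: "(c * cos u) / d + 1/d = 1" unfolding d_def using d[unfolded d_def] by (simp add: field_simps)
  have lnm: "ln (m * sin u) = ln (sin u) - ln x - ln y - ln d"
    unfolding m_def using xy d si by (simp add: ln_mult_pos ln_divide_pos)
  have ln2u: "ln (2*u) = ln 2 + ln u" using u by (simp add: ln_mult_pos)
  have lnxy: "ln (x*y) = ln x + ln y" using xy by (simp add: ln_mult_pos)
  have "ip3 (l1,l2,l3) (x*y*c, x^2, y^2) - Lam (l1,l2,l3) = x^2/2 + y^2/2 - 1 - ln (x*y) + Gf c u"
    unfolding V t1 t2 t3 lnm ln2u lnxy Gf_def d_def[symmetric] using t4 by (simp add: algebra_simps add_divide_distrib diff_divide_distrib)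
  then show ?thesis using ndpos co m unfolding l2_def l3_def l1_def using a b
    by (intro exI[of _ l1] exI[of _ l2] exI[of _ l3]) (auto simp: l1_def l2_def l3_def)
qed

lemma LamStar_char:
  fixes x y c E :: real
  assumes xy: "x > 0" "y > 0" and c: "0 \<le> c"
    and ub: "\<And>u. 0 < u \<Longrightarrow> u < pi/2 \<Longrightarrow> Gf c u \<le> E"
    and ap: "\<And>e. e > 0 \<Longrightarrow> \<exists>u. 0 < u \<and> u < pi/2 \<and> Gf c u > E - e"
  shows "LamStarMinus (x*y*c, x^2, y^2) = ereal (x^2/2 + y^2/2 - 1 - ln (x*y) + E)"
proof -
  let ?C = "x^2/2 + y^2/2 - 1 - ln (x*y)"
  let ?V = "{l \<in> SS. fst l < 0}"
  let ?f = "\<lambda>l. ip3 l (x*y*c, x^2, y^2) - Lam l"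
  have mem: "(l1,l2,l3) \<in> ?V \<longleftrightarrow> l2 < 1/2 \<and> l3 < 1/2 \<and> l1 < 0 \<and> (1 - 2*l2) * (1 - 2*l3) - l1^2 > 0"
    for l1 l2 l3 :: real
    unfolding SS_def Dd_def by auto
  have UB: "?f l \<le> ?C + E" if "l \<in> ?V" for l
  proof -
    obtain l1 l2 l3 where l: "l = (l1,l2,l3)" by (cases l) auto
    have "l2 < 1/2" "l3 < 1/2" "l1 < 0" "(1 - 2*l2) * (1 - 2*l3) - l1^2 > 0"
      using that mem unfolding l by auto
    then obtain u where u: "0 < u" "u < pi/2" "?f (l1,l2,l3) \<le> ?C + Gf c u"
      using val_bound[OF xy c] by blast
    then show ?thesis using ub[OF u(1,2)] unfolding l by linarith
  qed
  have AP: "\<exists>l\<in>?V. ?f l > ?C + E - e" if e: "e > 0" for e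
  proof -
    obtain u where u: "0 < u" "u < pi/2" "Gf c u > E - e" using ap[OF e] by blast
    obtain l1 l2 l3 where l: "l2 < 1/2" "l3 < 1/2" "l1 < 0" "(1 - 2*l2) * (1 - 2*l3) - l1^2 > 0"
      "?f (l1,l2,l3) = ?C + Gf c u"
      using val_attain[OF xy c u(1,2)] by blast
    have "(l1,l2,l3) \<in> ?V" using l mem by blast
    then show ?thesis using l u by (intro bexI[of _ "(l1,l2,l3)"]) auto
  qed
  show ?thesis
    unfolding LamStarMinus_def
  proof (rule SUP_eqI)
    fix l assume "l \<in> ?V"
    then show "ereal (?f l) \<le> ereal (?C + E)" using UB by simp
  next
    fix z :: ereal assume z: "\<And>l. l \<in> ?V \<Longrightarrow> ereal (?f l) \<le> z"
    show "ereal (?C + E) \<le> z"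
    proof (cases z)
      case (real r)
      show ?thesis
      proof (rule ccontr)
        assume "\<not> ereal (?C + E) \<le> z"
        hence "r < ?C + E" using real by simp
        then obtain l where l: "l \<in> ?V" "?f l > ?C + E - (?C + E - r)"
          using AP[of "?C + E - r"] by auto
        have "ereal (?f l) \<le> ereal r" using z[OF l(1)] real by simp
        then show False using l by simp
      qed
    next
      case PInf then show ?thesis by simp
    next
      case MInf
      obtain l where l: "l \<in> ?V" using AP[of 1] by auto
      have "ereal (?f l) \<le> -\<infinity>" using z[OF l] MInf by simp
      then show ?thesis by simp
    qed
  qed
qed

lemma div_helper1: "(co::real) > 0 \<Longrightarrow> k \<noteq> 0 \<Longrightarrow> (p / co) * (s / co) / (k / (co * co)) = s * p / k"
  by (simp add: field_simps)
lemma div_helper2: "(b::real) \<noteq> 0 \<Longrightarrow> q \<noteq> 0 \<Longrightarrow> p * (b * s) / (b * q) = p * s / q"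
  by simp
lemma div_helper3: "(q::real) \<noteq> 0 \<Longrightarrow> p * s / q * (q / b) - s * (p / b) = 0"
  by (simp add: field_simps)

lemma div_helper4: "(co::real) \<noteq> 0 \<Longrightarrow> d \<noteq> 0 \<Longrightarrow>
  pi * (1/co) * ((c + co)/co) / (2 * (d/co)^2) = pi * (co + c) / (2*(d*d))"
  by (simp add: field_simps power2_eq_square)

lemma beta_R2:
  fixes c u1 :: real
  assumes c: "0 < c" and u1: "0 < u1" "u1 < pi/2" "Kf c u1 = 0"
    "\<forall>x. 0 < x \<and> x < u1 \<longrightarrow> Kf c x > 0" "\<forall>x. u1 < x \<and> x \<le> pi/2 \<longrightarrow> Kf c x < 0"
  shows "(THE b. 1 < b \<and> arccos (1 / b) = (b + c) * sqrt (b^2 - 1) / (b * (b * c + 1))) = 1 / cos u1"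
proof (rule the_equality)
  have co: "cos u1 > 0" using u1 by (intro cos_gt_zero) auto
  have si: "sin u1 > 0" using u1 by (intro sin_gt_zero) auto
  have co1: "cos u1 < 1"
  proof -
    have "cos u1 < cos 0" using u1 by (subst cos_mono_less_eq) auto
    then show ?thesis by simp
  qed
  show "1 < 1 / cos u1 \<and> arccos (1 / (1 / cos u1)) = (1 / cos u1 + c) * sqrt ((1 / cos u1)^2 - 1) /
      (1 / cos u1 * (1 / cos u1 * c + 1))"
  proof
    show "1 < 1 / cos u1" using co co1 by simp
    have ac: "arccos (1 / (1 / cos u1)) = u1" using u1 by (simp add: arccos_cos)
    have sq: "sqrt ((1 / cos u1)^2 - 1) = sin u1 / cos u1"
    proof (rule sqrt_sq_eq)
      show "0 \<le> sin u1 / cos u1" using co si by simp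
      show "(1 / cos u1)^2 - 1 = (sin u1 / cos u1)^2"
        using co by (simp add: field_simps sin_squared_eq)
    qed
    have K: "u1 * (cos u1 + c) = sin u1 * (1 + c * cos u1)" using u1(3) unfolding Kf_def by simp
    have e1: "1 / cos u1 + c = (1 + c * cos u1) / cos u1" using co by (simp add: field_simps)
    have e2: "1 / cos u1 * (1 / cos u1 * c + 1) = (cos u1 + c) / (cos u1 * cos u1)"
      using co by (simp add: field_simps)
    have cc: "cos u1 + c > 0" using co c by simp
    have "(1 / cos u1 + c) * (sin u1 / cos u1) / (1 / cos u1 * (1 / cos u1 * c + 1)) =
        sin u1 * (1 + c * cos u1) / (cos u1 + c)"
      unfolding e1 e2 using co cc by (intro div_helper1) auto
    also have "\<dots> = u1" using K co c by (simp add: field_simps)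
    finally show "arccos (1 / (1 / cos u1)) = (1 / cos u1 + c) * sqrt ((1 / cos u1)^2 - 1) /
      (1 / cos u1 * (1 / cos u1 * c + 1))" unfolding ac sq by simp
  qed
next
  fix b assume b: "1 < b \<and> arccos (1 / b) = (b + c) * sqrt (b^2 - 1) / (b * (b * c + 1))"
  define v where "v = arccos (1/b)"
  have b1: "b > 1" and eq: "v = (b + c) * sqrt (b^2 - 1) / (b * (b * c + 1))" using b v_def by auto
  have ib: "0 < 1/b" "1/b < 1" using b1 by auto
  have h1: "-1 \<le> 1/b" "1/b \<le> 1" using ib(1) ib(2) by linarith+
  have cv: "cos v = 1/b" unfolding v_def by (rule cos_arccos[OF h1])
  have v0: "0 < v" using arccos_lt_bounded[of "1/b"] ib unfolding v_def by auto
  have vle: "v \<le> pi/2" using arccos_le_pi2[of "1/b"] ib unfolding v_def by auto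
  have vne: "v \<noteq> pi/2"
  proof
    assume h: "v = pi/2"
    have "cos v = 0" unfolding h by simp
    thus False using cv ib by simp
  qed
  have sv: "sin v \<ge> 0" using v0 vle by (intro sin_ge_zero) auto
  have sq: "sqrt (b^2 - 1) = b * sin v"
  proof (rule sqrt_sq_eq)
    show "0 \<le> b * sin v" using b1 sv by simp
    have s2: "(sin v)^2 = 1 - (1/b)^2" using cv sin_squared_eq[of v] by simp
    have "(b * sin v)^2 = b^2 * (sin v)^2" by (simp only: power_mult_distrib)
    also have "\<dots> = b^2 * (1 - (1/b)^2)" unfolding s2 ..
    also have "\<dots> = b^2 - 1" using b1 by (simp add: right_diff_distrib power_divide)
    finally show "b^2 - 1 = (b * sin v)^2" by simp
  qed
  have bc: "b * c + 1 > 0" using b1 c by (simp add: add_pos_nonneg)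
  have "(b + c) * (b * sin v) / (b * (b * c + 1)) = (b + c) * sin v / (b * c + 1)"
    using b1 bc by (intro div_helper2) auto
  hence ve: "v = (b + c) * sin v / (b * c + 1)" using eq[unfolded sq] by (rule trans[rotated])
  have f1: "1/b + c = (b * c + 1) / b" using b1 by (simp add: field_simps)
  have f2: "1 + c * (1/b) = (b + c) / b" using b1 by (simp add: field_simps)
  have "Kf c v = v * ((b * c + 1) / b) - sin v * ((b + c) / b)"
    unfolding Kf_def cv f1 f2 ..
  also have "\<dots> = (b + c) * sin v / (b * c + 1) * ((b * c + 1) / b) - sin v * ((b + c) / b)"
    using ve by (rule arg_cong[where f = "\<lambda>t. t * ((b * c + 1) / b) - sin v * ((b + c) / b)"])
  also have "\<dots> = 0" using b1 bc by (intro div_helper3) auto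
  finally have "Kf c v = 0" .
  hence "Kf c v = 0" by simp
  hence "v = u1"
  proof -
    assume K0: "Kf c v = 0"
    show "v = u1"
    proof (rule ccontr)
      assume "v \<noteq> u1"
      then consider "v < u1" | "v > u1" by linarith
      then show False
      proof cases
        case 1
        have "Kf c v > 0" using u1(4) v0 1 by blast
        then show False using K0 by simp
      next
        case 2
        have "Kf c v < 0" using u1(5) vle 2 by blast
        then show False using K0 by simp
      qed
    qed
  qed
  then show "b = 1 / cos u1" using cv b1 by simp
qed

lemma value_R2:
  fixes c u1 :: real
  assumes c: "0 < c" and u1: "0 < u1" "u1 < pi/2" "Kf c u1 = 0"
  shows "Gf c u1 = ln (pi * (1 / cos u1) * ((1 / cos u1) * c + 1) / (2 * (c + 1 / cos u1)^2))"
proof -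
  have co: "cos u1 > 0" using u1 by (intro cos_gt_zero) auto
  have si: "sin u1 > 0" using u1 by (intro sin_gt_zero) auto
  define d where "d = 1 + c * cos u1"
  have d: "d > 0" using co c unfolding d_def by (simp add: add_pos_nonneg)
  have cc: "cos u1 + c > 0" using co c by simp
  have K: "u1 * (cos u1 + c) = sin u1 * d" using u1(3) unfolding Kf_def d_def by simp
  have ue: "u1 = sin u1 * d / (cos u1 + c)" using K cc by (simp add: field_simps)
  have lnu0: "ln u1 = ln (sin u1 * d / (cos u1 + c))" using ue by (rule arg_cong)
  have lnu: "ln u1 = ln (sin u1) + ln d - ln (cos u1 + c)"
    unfolding lnu0 using si d cc by (simp add: ln_mult_pos ln_divide_pos)
  have arg: "pi * (1 / cos u1) * ((1 / cos u1) * c + 1) / (2 * (c + 1 / cos u1)^2) =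
      pi * (cos u1 + c) / (2 * (d * d))"
  proof -
    have g1: "(1 / cos u1) * c + 1 = (c + cos u1) / cos u1" using co by (simp add: field_simps)
    have g2: "c + 1 / cos u1 = d / cos u1" unfolding d_def using co by (simp add: field_simps)
    show ?thesis unfolding g1 g2 using co d by (intro div_helper4) auto
  qed
  have "ln (pi * (cos u1 + c) / (2 * (d * d))) = ln pi + ln (cos u1 + c) - ln 2 - ln d - ln d"
    using cc d pi_gt_zero by (simp add: ln_mult_pos ln_divide_pos)
  then show ?thesis unfolding arg Gf_def lnu d_def[symmetric] by simp
qed

theorem lemma10:
  fixes x y \<theta> :: real
  assumes "x > 0" and "y > 0" and "0 < \<theta>" and "\<theta> < pi/2"
  shows "LamStarMinus (x*y*cos \<theta>, x^2, y^2) =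
    ereal (x^2/2 + y^2/2 - 1 - ln (x*y) +
      (if \<theta> \<le> arccos (2/pi) then 0
       else if \<theta> < pi/3 then
         ln (pi * beta1 \<theta> * (beta1 \<theta> * cos \<theta> + 1) / (2 * (cos \<theta> + beta1 \<theta>)^2))
       else ln (pi / (2 * (1 + cos \<theta>)))))"
proof -
  have c0: "cos \<theta> > 0" using assms by (intro cos_gt_zero) auto
  have pi2: "2/pi \<le> 1" using pi_gt3 by simp
  have ac: "0 \<le> arccos (2/pi)" "arccos (2/pi) \<le> pi" "cos (arccos (2/pi)) = 2/pi"
  proof -
    have p0: "0 < 2/pi" by simp
    have m1: "-1 \<le> 2/pi" using p0 by linarith
    show "0 \<le> arccos (2/pi)" "arccos (2/pi) \<le> pi" using arccos_bounded[OF m1 pi2] by auto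
    show "cos (arccos (2/pi)) = 2/pi" by (rule cos_arccos[OF m1 pi2])
  qed
  have R1iff: "\<theta> \<le> arccos (2/pi) \<longleftrightarrow> 2/pi \<le> cos \<theta>"
    using cos_mono_le_eq[of "arccos (2/pi)" \<theta>] ac assms by auto
  have R3iff: "\<theta> < pi/3 \<longleftrightarrow> 1/2 < cos \<theta>"
    using cos_mono_less_eq[of "pi/3" \<theta>] assms cos_60 by auto
  show ?thesis
  proof (cases "\<theta> \<le> arccos (2/pi)")
    case True
    have c: "2/pi \<le> cos \<theta>" using True R1iff by simp
    have "LamStarMinus (x*y*cos \<theta>, x^2, y^2) = ereal (x^2/2 + y^2/2 - 1 - ln (x*y) + 0)"
    proof (rule LamStar_char[OF assms(1,2)])
      show "0 \<le> cos \<theta>" using c0 by simp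
      show "Gf (cos \<theta>) u \<le> 0" if "0 < u" "u < pi/2" for u using G_le_R1[OF c that] .
      show "\<exists>u. 0 < u \<and> u < pi/2 \<and> Gf (cos \<theta>) u > 0 - e" if "e > 0" for e
        using approx_left[OF Gf_limpi2[of "cos \<theta>"] _ that, of 0] c0 by auto
    qed
    then show ?thesis using True by simp
  next
    case F1: False
    have c2: "cos \<theta> < 2/pi" using F1 R1iff by simp
    show ?thesis
    proof (cases "\<theta> < pi/3")
      case True
      have c1: "1/2 < cos \<theta>" using True R3iff by simp
      obtain u1 where u1: "0 < u1" "u1 < pi/2" "Kf (cos \<theta>) u1 = 0"
        "\<forall>x. 0 < x \<and> x < u1 \<longrightarrow> Kf (cos \<theta>) x > 0" "\<forall>x. u1 < x \<and> x \<le> pi/2 \<longrightarrow> Kf (cos \<theta>) x < 0"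
        using R2_root[OF c1 c2] by blast
      have bt: "beta1 \<theta> = 1 / cos u1"
        unfolding beta1_def using beta_R2[OF c0 u1] .
      have "LamStarMinus (x*y*cos \<theta>, x^2, y^2) = ereal (x^2/2 + y^2/2 - 1 - ln (x*y) + Gf (cos \<theta>) u1)"
      proof (rule LamStar_char[OF assms(1,2)])
        show "0 \<le> cos \<theta>" using c0 by simp
        show "Gf (cos \<theta>) u \<le> Gf (cos \<theta>) u1" if "0 < u" "u < pi/2" for u
          using G_le_R2[of "cos \<theta>" u1 u] c0 u1 that by auto
        show "\<exists>u. 0 < u \<and> u < pi/2 \<and> Gf (cos \<theta>) u > Gf (cos \<theta>) u1 - e" if "e > 0" for e
          using u1 that by (intro exI[of _ u1]) auto
      qed
      moreover have "Gf (cos \<theta>) u1 = ln (pi * beta1 \<theta> * (beta1 \<theta> * cos \<theta> + 1) / (2 * (cos \<theta> + beta1 \<theta>)^2))"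
        unfolding bt using value_R2[OF c0 u1(1-3)] .
      ultimately show ?thesis using F1 True by simp
    next
      case False
      have c1: "cos \<theta> \<le> 1/2" using False R3iff by simp
      have "LamStarMinus (x*y*cos \<theta>, x^2, y^2) =
          ereal (x^2/2 + y^2/2 - 1 - ln (x*y) + ln (pi / (2 * (1 + cos \<theta>))))"
      proof (rule LamStar_char[OF assms(1,2)])
        show "0 \<le> cos \<theta>" using c0 by simp
        show "Gf (cos \<theta>) u \<le> ln (pi / (2 * (1 + cos \<theta>)))" if "0 < u" "u < pi/2" for u
          using G_le_R3[of "cos \<theta>" u] c0 c1 that by auto
        show "\<exists>u. 0 < u \<and> u < pi/2 \<and> Gf (cos \<theta>) u > ln (pi / (2 * (1 + cos \<theta>))) - e" if "e > 0" for e
          using approx_right[OF Gf_lim0[of "cos \<theta>"] _ that, of "pi/2"] c0 by auto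
      qed
      then show ?thesis using F1 False by simp
    qed
  qed
qed

end
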